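(* Let $T$ be a hypercyclic bounded operator on a separable Banach space $X$ with $c(T)>0$. Then there is a comeager set of vectors $x\in X$ such that $\|T^ix\|\to0$ as $i\to\infty$ along some set $D_x\subset\mathbb N$ with $\overline{\mathrm{dens}}(D_x)\ge c(T)$.
   Context: $HC(T)$ is the set of vectors with dense $T$-orbit. $\mathcal N_T(x,B)=\{i\in\mathbb N:T^ix\in B\}$; $\overline{\mathrm{dens}}(D)=\limsup_N\frac1N\#(D\cap[1,N])$; $B_R$ is the closed ball of radius $R$ centred at $0$. $c(T)=\sup_{R>0}\sup_{x\in HC(T)}\overline{\mathrm{dens}}\,\mathcal N_T(x,B_R)$. *)

theory Defs
  imports "HOL-Analysis.Analysis" "HOL-Library.Extended_Real"
begin

definition HC :: "('a::real_normed_vector \<Rightarrow> 'a) \<Rightarrow> 'a set" where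
  "HC T = {x. closure (range (\<lambda>n. (T ^^ n) x)) = UNIV}"

definition hypercyclic :: "('a::real_normed_vector \<Rightarrow> 'a) \<Rightarrow> bool" where
  "hypercyclic T \<longleftrightarrow> HC T \<noteq> {}"

definition return_set :: "('a \<Rightarrow> 'a) \<Rightarrow> 'a \<Rightarrow> 'a set \<Rightarrow> nat set" where
  "return_set T x B = {i. 1 \<le> i \<and> (T ^^ i) x \<in> B}"

definition upper_dens :: "nat set \<Rightarrow> ereal" where
  "upper_dens D = limsup (\<lambda>N. ereal (real (card (D \<inter> {1..N})) / real N))"

definition c_const :: "('a::real_normed_vector \<Rightarrow> 'a) \<Rightarrow> ereal" where
  "c_const T = (SUP R \<in> {R::real. R > 0}. SUP x \<in> HC T. upper_dens (return_set T x (cball 0 R)))"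

definition comeager :: "'a::topological_space set \<Rightarrow> bool" where
  "comeager G \<longleftrightarrow> (\<exists>\<F>. countable \<F> \<and> (\<forall>U\<in>\<F>. open U \<and> closure U = UNIV) \<and> \<Inter>\<F> \<subseteq> G)"

end

theory Submission
  imports Defs "HOL-Real_Asymp.Real_Asymp"
begin

lemma funpow_scaleR:
  fixes T :: "'a::real_vector \<Rightarrow> 'a"
  assumes "linear T"
  shows "(T ^^ n) (a *\<^sub>R x) = a *\<^sub>R (T ^^ n) x"
  by (induction n) (auto simp: linear_cmul[OF assms])
lemma bl_funpow:
  fixes T :: "'a::real_normed_vector \<Rightarrow> 'a"
  assumes "bounded_linear T"
  shows "bounded_linear (T ^^ n)"
proof (induction n)
  case 0 then show ?case by (simp add: id_def)
next
  case (Suc n) then show ?case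
    using bounded_linear_compose[OF assms Suc] by (simp add: o_def)
qed

lemma upper_dens_le1: "upper_dens D \<le> 1"
  unfolding upper_dens_def
proof (rule Limsup_bounded, rule always_eventually, rule allI)
  fix N :: nat
  have "card (D \<inter> {1..N}) \<le> card {1..N}" by (rule card_mono) auto
  then have "real (card (D \<inter> {1..N})) \<le> real N" by simp
  then show "ereal (real (card (D \<inter> {1..N})) / real N) \<le> 1"
    by (cases "N = 0") (auto simp: divide_le_eq_1)
qed

lemma freq_of_less_limsup:
  fixes X :: "nat \<Rightarrow> ereal"
  assumes "a < limsup X"
  shows "\<forall>M. \<exists>n\<ge>M. a < X n"
proof -
  have "\<not> eventually (\<lambda>n. X n \<le> a) sequentially"
    using Limsup_bounded[of X a sequentially] assms by auto
  then have "frequently (\<lambda>n. a < X n) sequentially"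
    by (simp add: not_eventually not_le)
  then show ?thesis by (simp add: frequently_sequentially)
qed

lemma open_U:
  fixes g :: "nat \<Rightarrow> 'a::real_normed_vector \<Rightarrow> 'b::real_normed_vector"
  assumes cont: "\<And>i. continuous_on UNIV (g i)"
  shows "open {x. \<exists>N\<ge>M. r N < real (card {i\<in>{1..N}. norm (g i x) < e})}"
proof -
  have eq: "{x. \<exists>N\<ge>M. r N < real (card {i\<in>{1..N}. norm (g i x) < e})} =
    (\<Union>N\<in>{M..}. \<Union>A\<in>{A. A \<subseteq> {1..N} \<and> r N < real (card A)}. \<Inter>i\<in>A. {x. norm (g i x) < e})"
  proof (intro set_eqI iffI)
    fix x assume "x \<in> {x. \<exists>N\<ge>M. r N < real (card {i\<in>{1..N}. norm (g i x) < e})}"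
    then obtain N where "N \<ge> M" "r N < real (card {i\<in>{1..N}. norm (g i x) < e})" by auto
    then show "x \<in> (\<Union>N\<in>{M..}. \<Union>A\<in>{A. A \<subseteq> {1..N} \<and> r N < real (card A)}. \<Inter>i\<in>A. {x. norm (g i x) < e})"
      by (intro UN_I[of N], simp, intro UN_I[of "{i\<in>{1..N}. norm (g i x) < e}"]) auto
  next
    fix x assume "x \<in> (\<Union>N\<in>{M..}. \<Union>A\<in>{A. A \<subseteq> {1..N} \<and> r N < real (card A)}. \<Inter>i\<in>A. {x. norm (g i x) < e})"
    then obtain N A where NA: "N \<ge> M" "A \<subseteq> {1..N}" "r N < real (card A)" "\<forall>i\<in>A. norm (g i x) < e" by auto
    have "card A \<le> card {i\<in>{1..N}. norm (g i x) < e}"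
      by (rule card_mono) (use NA in auto)
    then show "x \<in> {x. \<exists>N\<ge>M. r N < real (card {i\<in>{1..N}. norm (g i x) < e})}"
      using NA by (auto intro!: exI[of _ N])
  qed
  show ?thesis unfolding eq
  proof (intro open_UN ballI open_INT)
    fix N A i assume "A \<in> {A. A \<subseteq> {1..N} \<and> r N < real (card A)}"
    then show "finite A" by (auto intro: finite_subset)
  next
    fix i show "open {x. norm (g i x) < e}"
      by (rule open_Collect_less) (auto intro: continuous_on_norm cont)
  qed
qed

lemma diag:
  fixes A :: "nat \<Rightarrow> nat set" and c :: real
  assumes mono: "\<And>k. A (Suc k) \<subseteq> A k"
    and freq: "\<And>k M. \<exists>N\<ge>M. (c - 1 / (real k + 1)) * real N < real (card (A k \<inter> {1..N}))"
  shows "\<exists>D. upper_dens D \<ge> ereal c \<and> (\<forall>k. finite (D - A k))"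
proof -
  obtain f where f: "\<And>k M. f k M \<ge> M \<and> (c - 1 / (real k + 1)) * real (f k M) < real (card (A k \<inter> {1..f k M}))"
  proof -
    define f where "f k M = (SOME N. N \<ge> M \<and> (c - 1 / (real k + 1)) * real N < real (card (A k \<inter> {1..N})))" for k M
    have "f k M \<ge> M \<and> (c - 1 / (real k + 1)) * real (f k M) < real (card (A k \<inter> {1..f k M}))" for k M
      unfolding f_def by (rule someI_ex) (use freq in blast)
    then show ?thesis using that by blast
  qed
  define Ns where "Ns = rec_nat 0 (\<lambda>k n. f k ((k+1)*(n+1)))"
  have Ns0: "Ns 0 = 0" by (simp add: Ns_def)
  have NsS: "Ns (Suc k) = f k ((k+1)*(Ns k + 1))" for k by (simp add: Ns_def)
  have big: "Ns (Suc k) \<ge> (k+1)*(Ns k + 1)" for k using f NsS by metis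
  have "Ns k < Ns (Suc k)" for k
  proof -
    have "Ns k < (k+1)*(Ns k + 1)" by simp
    then show ?thesis using big[of k] by linarith
  qed
  then have sm: "strict_mono Ns" by (simp add: strict_mono_Suc_iff)
  define D where "D = {i. \<exists>k. Ns k < i \<and> i \<le> Ns (Suc k) \<and> i \<in> A k}"
  have fin: "finite (D - A j)" for j
  proof (rule finite_subset[of _ "{..Ns j}"])
    show "D - A j \<subseteq> {..Ns j}"
    proof
      fix i assume "i \<in> D - A j"
      then obtain k where k: "Ns k < i" "i \<le> Ns (Suc k)" "i \<in> A k" "i \<notin> A j"
        unfolding D_def by auto
      show "i \<in> {..Ns j}"
      proof (cases "j \<le> k")
        case True
        then have "A k \<subseteq> A j" using lift_Suc_antimono_le[of A, OF mono] by blast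
        then show ?thesis using k by auto
      next
        case False
        then have "Ns (Suc k) \<le> Ns j" using sm by (simp add: strict_mono_less_eq)
        then show ?thesis using k by auto
      qed
    qed
  qed simp
  define X where "X = (\<lambda>N. ereal (real (card (D \<inter> {1..N})) / real N))"
  have low: "c - 2 / (real k + 1) \<le> real (card (D \<inter> {1..Ns (Suc k)})) / real (Ns (Suc k))" for k
  proof -
    let ?P = "Ns (Suc k)" and ?n = "Ns k"
    have sub1: "A k \<inter> {1..?P} \<subseteq> {1..?n} \<union> (D \<inter> {1..?P})"
      unfolding D_def by (auto simp: not_le intro: exI[of _ k])
    have "card (A k \<inter> {1..?P}) \<le> card ({1..?n} \<union> (D \<inter> {1..?P}))"
      by (rule card_mono[OF _ sub1]) auto
    also have "\<dots> \<le> ?n + card (D \<inter> {1..?P})"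
      using card_Un_le[of "{1..?n}" "D \<inter> {1..?P}"] by simp
    finally have c1: "real (card (A k \<inter> {1..?P})) \<le> real ?n + real (card (D \<inter> {1..?P}))"
      by linarith
    have c2: "(c - 1 / (real k + 1)) * real ?P < real (card (A k \<inter> {1..?P}))"
      using f NsS by metis
    have "real ((k+1)*(?n+1)) \<le> real ?P" using big[of k] by linarith
    then have c3: "(real k + 1) * (real ?n + 1) \<le> real ?P" by (simp add: algebra_simps)
    have kp: "real k + 1 > 0" by simp
    have c4: "real ?n \<le> real ?P / (real k + 1)"
      using c3 kp by (simp add: field_simps)
    have Ppos: "real ?P > 0" using c3 kp
      by (smt (verit) mult_pos_pos of_nat_0_le_iff)
    have "(c - 2 / (real k + 1)) * real ?P = (c - 1 / (real k + 1)) * real ?P - real ?P / (real k + 1)"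
    proof -
      have "2 / (real k+1) = 1/(real k+1) + 1/(real k+1)" by (simp add: add_divide_distrib[symmetric])
      then show ?thesis by (simp add: algebra_simps)
    qed
    also have "\<dots> \<le> real (card (D \<inter> {1..?P}))" using c1 c2 c4 by linarith
    finally show ?thesis using pos_le_divide_eq[OF Ppos] by blast
  qed
  have eqc: "limsup (\<lambda>k. ereal (c - 2 / (real k + 1))) = ereal c"
  proof (rule lim_imp_Limsup)
    show "\<not> trivial_limit (sequentially :: nat filter)" by simp
    have "(\<lambda>k. c - 2 / (real k + 1)) \<longlonglongrightarrow> c"
      by real_asymp
    then show "(\<lambda>k. ereal (c - 2 / (real k + 1))) \<longlonglongrightarrow> ereal c" by simp
  qed
  have "ereal c \<le> limsup (X \<circ> (Ns \<circ> Suc))"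
    unfolding eqc[symmetric]
    using low by (intro Limsup_mono always_eventually) (simp add: X_def)
  also have "\<dots> \<le> limsup X"
    by (rule limsup_subseq_mono) (use sm in \<open>simp add: strict_mono_def\<close>)
  finally have "ereal c \<le> upper_dens D" by (simp add: upper_dens_def X_def)
  then show ?thesis using fin by blast
qed

lemma dense_U:
  fixes T :: "'a::real_normed_vector \<Rightarrow> 'a" and c :: real
  assumes bl: "bounded_linear T" and hc: "x0 \<in> HC T" and R: "R > 0" and c0: "c > 0"
    and dens: "ereal (c - 1 / (2 * (real k + 1))) < upper_dens (return_set T x0 (cball 0 R))"
  shows "closure {x. \<exists>N\<ge>M. (c - 1 / (real k + 1)) * real N
            < real (card {i\<in>{1..N}. norm ((T ^^ i) x) < 1 / (real k + 1)})} = UNIV"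
    (is "closure ?U = UNIV")
proof -
  have lin: "linear T" using bl bounded_linear.linear by blast
  define d where "d = 1 / (2 * (real k + 1))"
  have d0: "d > 0" and d2: "1 / (real k + 1) = 2 * d" and dle: "d \<le> 1/2"
    by (auto simp: d_def field_simps)
  define a where "a = 1 / (2 * R * (real k + 1))"
  have a0: "a > 0" using R by (simp add: a_def)
  have aR: "a * R = d" using R by (simp add: a_def d_def)
  define Rs where "Rs = return_set T x0 (cball 0 R)"
  have orb: "closure (range (\<lambda>n. (T ^^ n) x0)) = UNIV" using hc by (simp add: HC_def)
  have freq: "\<forall>M. \<exists>n\<ge>M. ereal (c - d) < ereal (real (card (Rs \<inter> {1..n})) / real n)"
    by (rule freq_of_less_limsup) (use dens in \<open>simp add: d_def Rs_def upper_dens_def\<close>)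
  have "z \<in> closure ?U" for z :: 'a
    unfolding closure_approachable
  proof (intro allI impI)
    fix e :: real assume e0: "e > 0"
    have "(1/a) *\<^sub>R z \<in> closure (range (\<lambda>n. (T ^^ n) x0))" using orb by simp
    then obtain m where m: "dist ((T ^^ m) x0) ((1/a) *\<^sub>R z) < e / a"
      using e0 a0 unfolding closure_approachable by (auto dest!: spec[of _ "e/a"])
    define y where "y = a *\<^sub>R (T ^^ m) x0"
    have "dist y z = a * dist ((T ^^ m) x0) ((1/a) *\<^sub>R z)"
    proof -
      have "y - z = a *\<^sub>R ((T ^^ m) x0 - (1/a) *\<^sub>R z)"
        using a0 by (simp add: y_def algebra_simps)
      then show ?thesis using a0 by (simp add: dist_norm)
    qed
    also have "\<dots> < e" using m a0 by (simp add: field_simps)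
    finally have dyz: "dist y z < e" .
    have Ty: "(T ^^ i) y = a *\<^sub>R (T ^^ (i + m)) x0" for i
      by (simp add: y_def funpow_scaleR[OF lin] funpow_add)
    obtain N' where N': "N' \<ge> M + m + 4 * m * (k+1) + 1"
      "ereal (c - d) < ereal (real (card (Rs \<inter> {1..N'})) / real N')"
      using freq by blast
    have N'pos: "real N' > 0" using N'(1) by simp
    have r1: "(c - d) * real N' < real (card (Rs \<inter> {1..N'}))"
      using N'(2) N'pos by (simp add: pos_less_divide_eq)
    define N where "N = N' - m"
    have NM: "N \<ge> M" using N'(1) by (simp add: N_def)
    have NN': "real N = real N' - real m" using N'(1) by (simp add: N_def of_nat_diff)
    let ?B = "{i\<in>{1..N}. norm ((T ^^ i) y) < 1 / (real k + 1)}"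
    have sub: "Rs \<inter> {1..N'} \<subseteq> {1..m} \<union> (\<lambda>i. i + m) ` ?B"
    proof
      fix j assume j: "j \<in> Rs \<inter> {1..N'}"
      show "j \<in> {1..m} \<union> (\<lambda>i. i + m) ` ?B"
      proof (cases "j \<le> m")
        case True then show ?thesis using j by auto
      next
        case False
        have "norm ((T ^^ j) x0) \<le> R" using j by (simp add: Rs_def return_set_def)
        then have "a * norm ((T ^^ j) x0) \<le> a * R" using a0 by simp
        then have "norm ((T ^^ (j - m)) y) \<le> d" using False a0 aR
          by (simp add: Ty)
        then have "norm ((T ^^ (j - m)) y) < 1 / (real k + 1)" using d2 d0 by linarith
        moreover have "j - m \<in> {1..N}" using False j by (auto simp: N_def)
        ultimately have "j - m \<in> ?B" by simp
        then show ?thesis using False by (auto intro!: image_eqI[of _ _ "j - m"])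
      qed
    qed
    have "card (Rs \<inter> {1..N'}) \<le> card ({1..m} \<union> (\<lambda>i. i + m) ` ?B)"
      by (rule card_mono[OF _ sub]) auto
    also have "\<dots> \<le> m + card ((\<lambda>i. i + m) ` ?B)"
      using card_Un_le[of "{1..m}"] by simp
    also have "\<dots> \<le> m + card ?B" using card_image_le[of ?B "\<lambda>i. i + m"] by simp
    finally have r2: "real (card (Rs \<inter> {1..N'})) \<le> real m + real (card ?B)" by linarith
    have big: "d * real N' \<ge> 2 * real m"
    proof -
      have "4 * m * (k + 1) \<le> N'" using N'(1) by linarith
      then have "real (4 * m * (k + 1)) \<le> real N'" by (simp only: of_nat_le_iff)
      then have "real N' \<ge> 4 * real m * (real k + 1)" by (simp add: algebra_simps)
      then have "d * real N' \<ge> d * (4 * real m * (real k + 1))" using d0 by simp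
      also have "d * (4 * real m * (real k + 1)) = 2 * real m" by (simp add: d_def field_simps)
      finally show ?thesis by simp
    qed
    have cm: "c * real m \<ge> 0" using c0 by simp
    have dm: "d * real m \<le> real m / 2"
      using mult_right_mono[OF dle, of "real m"] by simp
    have "(c - 1 / (real k + 1)) * real N = (c - 2 * d) * (real N' - real m)"
      by (simp add: d2 NN')
    also have "\<dots> = c * real N' - 2 * (d * real N') - c * real m + 2 * (d * real m)"
      by (simp add: algebra_simps)
    also have "\<dots> < real (card ?B)"
      using r1 r2 big cm dm by (simp add: algebra_simps)
    finally have "(c - 1 / (real k + 1)) * real N < real (card ?B)" .
    then have "y \<in> ?U" using NM by blast
    then show "\<exists>y\<in>?U. dist y z < e" using dyz by blast
  qed
  then show ?thesis by auto
qed

theorem proposition4: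
  fixes T :: "'a::banach \<Rightarrow> 'a"
  assumes "bounded_linear T"
    and "separable_space (euclidean :: 'a topology)"
    and "hypercyclic T"
    and "c_const T > 0"
  shows "\<exists>G. comeager G \<and>
    (\<forall>x\<in>G. \<exists>D::nat set. upper_dens D \<ge> c_const T \<and>
       (\<forall>e>0. finite {i\<in>D. norm ((T ^^ i) x) \<ge> e}))"
proof -
  note bl = assms(1)
  have le1: "c_const T \<le> 1"
    unfolding c_const_def by (intro SUP_least) (rule upper_dens_le1)
  obtain c where cdef: "c_const T = ereal c"
    using le1 assms(4) by (cases "c_const T") auto
  have c0: "c > 0" using assms(4) cdef by simp
  define U where "U k M = {x. \<exists>N\<ge>M. (c - 1 / (real k + 1)) * real N
            < real (card {i\<in>{1..N}. norm ((T ^^ i) x) < 1 / (real k + 1)})}" for k M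
  have openU: "open (U k M)" for k M
    unfolding U_def
    by (rule open_U) (rule linear_continuous_on[OF bl_funpow[OF bl]])
  have denseU: "closure (U k M) = UNIV" for k M
  proof -
    have "ereal (c - 1 / (2 * (real k + 1))) < c_const T"
      using cdef by simp
    then obtain R x0 where R: "R > 0" "x0 \<in> HC T"
      "ereal (c - 1 / (2 * (real k + 1))) < upper_dens (return_set T x0 (cball 0 R))"
      unfolding c_const_def less_SUP_iff by auto
    show ?thesis unfolding U_def by (rule dense_U[OF bl R(2) R(1) c0 R(3)])
  qed
  define F where "F = (\<lambda>(k, M). U k M) ` (UNIV :: (nat \<times> nat) set)"
  have cF: "comeager (\<Inter>F)"
    unfolding comeager_def
  proof (intro exI[of _ F] conjI ballI)
    show "countable F" unfolding F_def by simp
  next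
    fix V assume "V \<in> F"
    then show "open V" "closure V = UNIV" unfolding F_def using openU denseU by auto
  qed simp
  have good: "\<exists>D::nat set. upper_dens D \<ge> c_const T \<and>
       (\<forall>e>0. finite {i\<in>D. norm ((T ^^ i) x) \<ge> e})" if x: "x \<in> \<Inter>F" for x
  proof -
    define A where "A k = {i. norm ((T ^^ i) x) < 1 / (real k + 1)}" for k
    have monoA: "A (Suc k) \<subseteq> A k" for k
    proof
      fix i assume "i \<in> A (Suc k)"
      then have "norm ((T ^^ i) x) < 1 / (real k + 2)" by (simp add: A_def add.commute)
      also have "\<dots> \<le> 1 / (real k + 1)" by (simp add: frac_le)
      finally show "i \<in> A k" by (simp add: A_def)
    qed
    have freq: "\<exists>N\<ge>M. (c - 1 / (real k + 1)) * real N < real (card (A k \<inter> {1..N}))" for k M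
    proof -
      have "x \<in> U k M" using x unfolding F_def by auto
      then obtain N where "N \<ge> M" "(c - 1 / (real k + 1)) * real N
            < real (card {i\<in>{1..N}. norm ((T ^^ i) x) < 1 / (real k + 1)})"
        unfolding U_def by auto
      moreover have "{i\<in>{1..N}. norm ((T ^^ i) x) < 1 / (real k + 1)} = A k \<inter> {1..N}"
        by (auto simp: A_def)
      ultimately show ?thesis by auto
    qed
    obtain D where D: "upper_dens D \<ge> ereal c" "\<And>k. finite (D - A k)"
      using diag[of A c, OF monoA freq] by blast
    have "finite {i\<in>D. norm ((T ^^ i) x) \<ge> e}" if e: "e > 0" for e
    proof -
      obtain n where n: "inverse (real (Suc n)) < e" using reals_Archimedean[OF e] by auto
      have "{i\<in>D. norm ((T ^^ i) x) \<ge> e} \<subseteq> D - A n"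
      proof
        fix i assume "i \<in> {i\<in>D. norm ((T ^^ i) x) \<ge> e}"
        then have "i \<in> D" "norm ((T ^^ i) x) \<ge> e" by auto
        moreover have "1 / (real n + 1) < e" using n by (simp add: inverse_eq_divide add.commute)
        ultimately show "i \<in> D - A n" by (auto simp: A_def)
      qed
      then show ?thesis using D(2) finite_subset by blast
    qed
    then show ?thesis using D(1) cdef by auto
  qed
  show ?thesis using cF good by blast
qed

end
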